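(* Let $A\in\mathbb{C}^{m\times n}$ and $X\in\mathbb{C}^{n\times m}$. Then the following are equivalent: (1) $X\in A\{1,3^{\mathfrak{m}}\}$; (2) $A^{\sim}AX=A^{\sim}$; (3) $AX=P_{\mathcal{R}(A),\mathcal{N}(A^{\sim})}$. In this case, $$A\{1,3^{\mathfrak{m}}\}=\left\{A^{(1,3^{\mathfrak{m}})}+(I_n-A^{(1,3^{\mathfrak{m}})}A)Y : Y\in\mathbb{C}^{n\times m}\right\},$$ where $A^{(1,3^{\mathfrak{m}})}\in A\{1,3^{\mathfrak{m}}\}$ is fixed but arbitrary.
   Context: For a positive integer $k$, the Minkowski metric matrix of order $k$ is $G_k=\mathrm{diag}(1,-I_{k-1})$ (with $G_1=(1)$). For $A\in\mathbb{C}^{m\times n}$, the Minkowski adjoint is $A^{\sim}=G_nA^*G_m$, where $A^*$ is the conjugate transpose. For $A\in\mathbb{C}^{m\times n}$ and $X\in\mathbb{C}^{n\times m}$ consider the equations $(1)\ AXA=A$, $(2)\ XAX=X$, $(3^{\mathfrak{m}})\ (AX)^{\sim}=AX$, $(4^{\mathfrak{m}})\ (XA)^{\sim}=XA$; $A\{i,\dots,k\}$ denotes the set of all $X$ satisfying the listed equations. $\mathcal{R}(\cdot)$ and $\mathcal{N}(\cdot)$ denote range and null space. For subspaces $\mathcal{S},\mathcal{T}\subseteq\mathbb{C}^m$ with $\mathcal{S}\oplus\mathcal{T}=\mathbb{C}^m$, $P_{\mathcal{S},\mathcal{T}}$ denotes the projector onto $\mathcal{S}$ along $\mathcal{T}$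 (statement (3) includes that this direct sum holds). *)

theory Defs
  imports "Jordan_Normal_Form.Matrix" "Jordan_Normal_Form.Matrix_Kernel"
begin

definition minkowski_G :: "nat \<Rightarrow> complex mat" where
  "minkowski_G k = mat k k (\<lambda>(i,j). if i = j then (if i = 0 then 1 else -1) else 0)"

definition conj_transpose :: "complex mat \<Rightarrow> complex mat" where
  "conj_transpose A = mat (dim_col A) (dim_row A) (\<lambda>(i,j). cnj (A $$ (j,i)))"

definition mink_adj :: "complex mat \<Rightarrow> complex mat" where
  "mink_adj A = minkowski_G (dim_col A) * conj_transpose A * minkowski_G (dim_row A)"

definition mat_range :: "complex mat \<Rightarrow> complex vec set" where
  "mat_range A = {A *\<^sub>v x | x. x \<in> carrier_vec (dim_col A)}"

definition inv_1_3m :: "complex mat \<Rightarrow> complex mat set" where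
  "inv_1_3m A = {X \<in> carrier_mat (dim_col A) (dim_row A).
      A * X * A = A \<and> mink_adj (A * X) = A * X}"

definition is_proj_onto_along :: "nat \<Rightarrow> complex mat \<Rightarrow> complex vec set \<Rightarrow> complex vec set \<Rightarrow> bool" where
  "is_proj_onto_along k P S T \<longleftrightarrow>
     P \<in> carrier_mat k k \<and> S \<subseteq> carrier_vec k \<and> T \<subseteq> carrier_vec k \<and>
     S \<inter> T = {0\<^sub>v k} \<and> (\<forall>v \<in> carrier_vec k. \<exists>s \<in> S. \<exists>t \<in> T. v = s + t) \<and>
     (\<forall>s \<in> S. P *\<^sub>v s = s) \<and> (\<forall>t \<in> T. P *\<^sub>v t = 0\<^sub>v k)"

end

theory Submission imports Defs begin

lemma massoc: "dim_col A = dim_row B \<Longrightarrow> dim_col B = dim_row C \<Longrightarrow> (A * B) * C = A * (B * C)"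
  by (rule assoc_mult_mat[of A "dim_row A" "dim_col A" B "dim_col B" C "dim_col C"]) auto

lemma ct_carrier[simp]: "conj_transpose A \<in> carrier_mat (dim_col A) (dim_row A)"
  unfolding conj_transpose_def by auto
lemma ct_dims[simp]: "dim_row (conj_transpose A) = dim_col A" "dim_col (conj_transpose A) = dim_row A"
  unfolding conj_transpose_def by auto
lemma ct_ct[simp]: "conj_transpose (conj_transpose A) = A"
  unfolding conj_transpose_def by (intro eq_matI) auto
lemma ct_mult: assumes "A \<in> carrier_mat m k" "B \<in> carrier_mat k n"
  shows "conj_transpose (A * B) = conj_transpose B * conj_transpose A"
  using assms unfolding conj_transpose_def
  by (intro eq_matI) (auto simp: scalar_prod_def cnj_sum mult.commute)

lemma G_carrier[simp]: "minkowski_G k \<in> carrier_mat k k"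
  unfolding minkowski_G_def by auto
lemma G_dims[simp]: "dim_row (minkowski_G k) = k" "dim_col (minkowski_G k) = k"
  unfolding minkowski_G_def by auto
lemma G_G: "minkowski_G k * minkowski_G k = 1\<^sub>m k"
proof (intro eq_matI)
  fix i j assume ij: "i < dim_row (1\<^sub>m k)" "j < dim_col (1\<^sub>m k)"
  have "(minkowski_G k * minkowski_G k) $$ (i,j) = (\<Sum>l<k. minkowski_G k $$ (i,l) * minkowski_G k $$ (l,j))"
    using ij by (auto simp: scalar_prod_def atLeast0LessThan)
  also have "\<dots> = (\<Sum>l\<in>{i}. minkowski_G k $$ (i,l) * minkowski_G k $$ (l,j))"
    using ij by (intro sum.mono_neutral_right) (auto simp: minkowski_G_def)
  also have "\<dots> = 1\<^sub>m k $$ (i,j)" using ij by (auto simp: minkowski_G_def)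
  finally show "(minkowski_G k * minkowski_G k) $$ (i,j) = 1\<^sub>m k $$ (i,j)" .
qed auto

lemma adj_carrier[simp]: "mink_adj A \<in> carrier_mat (dim_col A) (dim_row A)"
  unfolding mink_adj_def by (auto intro!: mult_carrier_mat)
lemma adj_dims[simp]: "dim_row (mink_adj A) = dim_col A" "dim_col (mink_adj A) = dim_row A"
  unfolding mink_adj_def by auto

lemma adj_mult: assumes A: "A \<in> carrier_mat m k" and B: "B \<in> carrier_mat k n"
  shows "mink_adj (A * B) = mink_adj B * mink_adj A"
proof -
  let ?G = minkowski_G
  have cA: "conj_transpose A \<in> carrier_mat k m" and cB: "conj_transpose B \<in> carrier_mat n k"
    using A B ct_carrier by auto
  have "mink_adj (A * B) = ?G n * (conj_transpose B * conj_transpose A) * ?G m"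
    using A B by (simp add: mink_adj_def ct_mult)
  also have "\<dots> = ?G n * conj_transpose B * (?G k * ?G k) * conj_transpose A * ?G m"
    using A B by (simp add: massoc G_G)
  also have "\<dots> = mink_adj B * mink_adj A"
    using A B unfolding mink_adj_def by (simp add: massoc)
  finally show ?thesis .
qed

lemma adj_adj[simp]: "mink_adj (mink_adj A) = A"
proof -
  let ?G = minkowski_G
  obtain m n where A: "A \<in> carrier_mat m n" by auto
  have "mink_adj (mink_adj A) = ?G m * conj_transpose (?G n * conj_transpose A * ?G m) * ?G n"
    using A by (simp add: mink_adj_def)
  also have "conj_transpose (?G n * conj_transpose A * ?G m) = ?G m * A * ?G n"
  proof -
    have ctG: "conj_transpose (?G k) = ?G k" for k
      unfolding conj_transpose_def minkowski_G_def by (intro eq_matI) auto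
    have "conj_transpose (?G n * conj_transpose A * ?G m) = conj_transpose (?G m) * conj_transpose (?G n * conj_transpose A)"
      using A by (intro ct_mult[of _ n m]) (auto intro!: mult_carrier_mat)
    also have "conj_transpose (?G n * conj_transpose A) = conj_transpose (conj_transpose A) * conj_transpose (?G n)"
      using A by (intro ct_mult[of _ n n _ m]) auto
    finally show ?thesis using A ctG by (simp add: massoc)
  qed
  also have "?G m * (?G m * A * ?G n) * ?G n = A"
  proof -
    have "?G m * (?G m * A * ?G n) * ?G n = (?G m * ?G m) * A * (?G n * ?G n)"
      using A by (simp add: massoc)
    thus ?thesis using A by (simp add: G_G)
  qed
  finally show ?thesis .
qed

lemma mv_zero[simp]: "M \<in> carrier_mat nr nc \<Longrightarrow> M *\<^sub>v 0\<^sub>v nc = 0\<^sub>v nr"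
  by (intro eq_vecI) auto

lemma mv_unit: fixes M :: "complex mat" assumes M: "M \<in> carrier_mat nr nc" and i: "i < nc" shows "M *\<^sub>v unit_vec nc i = col M i"
proof (rule eq_vecI)
  fix j assume j: "j < dim_vec (col M i)"
  have d: "dim_row M = nr" "dim_col M = nc" using M by auto
  have "row M j \<bullet> unit_vec nc i = row M j $ i" by (rule scalar_prod_right_unit[OF i])
  also have "\<dots> = M $$ (j, i)" using j i d by simp
  finally show "(M *\<^sub>v unit_vec nc i) $ j = col M i $ j" using j i d by simp
qed (use M in simp)

lemma P2:
  assumes A: "A \<in> carrier_mat m n" and X: "X \<in> carrier_mat n m"
    and E: "mink_adj A * A * X = mink_adj A"
  shows "mink_adj X * mink_adj A * A = A" "A * X * A = A" "mink_adj (A * X) = A * X"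
proof -
  have Aa: "mink_adj A \<in> carrier_mat n m" and Xa: "mink_adj X \<in> carrier_mat m n"
    using adj_carrier[of A] adj_carrier[of X] A X by auto
  have "A = mink_adj (mink_adj A * A * X)" using E by simp
  also have "\<dots> = mink_adj X * mink_adj (mink_adj A * A)"
    using A X Aa by (intro adj_mult[of _ n n _ m]) auto
  also have "mink_adj (mink_adj A * A) = mink_adj A * A"
    using A Aa by (subst adj_mult[of _ n m _ n]) auto
  finally have 1: "A = mink_adj X * (mink_adj A * A)" .
  show 11: "mink_adj X * mink_adj A * A = A" using 1[symmetric] A Xa Aa by (simp add: massoc)
  have E': "mink_adj A * (A * (X * A)) = mink_adj A * A"
  proof -
    have "mink_adj A * (A * (X * A)) = (mink_adj A * A * X) * A" using A X Aa
      by (simp add: massoc carrier_matD[OF A] carrier_matD[OF X] carrier_matD[OF Aa])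
    thus ?thesis using E by simp
  qed
  have "(mink_adj X * (mink_adj A * A)) * X * A = mink_adj X * (mink_adj A * (A * (X * A)))"
    using A X Aa Xa by (simp add: massoc carrier_matD[OF A] carrier_matD[OF X] carrier_matD[OF Aa] carrier_matD[OF Xa])
  hence "A * X * A = mink_adj X * (mink_adj A * (A * (X * A)))"
    using 1[symmetric] by (simp only:)
  also have "\<dots> = mink_adj X * (mink_adj A * A)" by (simp only: E')
  also have "\<dots> = A" by (rule 1[symmetric])
  finally show "A * X * A = A" .
  have "mink_adj (A * X) = mink_adj X * mink_adj A" using A X by (simp add: adj_mult)
  also have "\<dots> = mink_adj X * (mink_adj A * (A * X))" using E A X Aa by (simp add: massoc)
  also have "\<dots> = (mink_adj X * (mink_adj A * A)) * X" using A X Aa Xa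
    by (simp add: massoc carrier_matD[OF A] carrier_matD[OF X] carrier_matD[OF Aa] carrier_matD[OF Xa])
  also have "\<dots> = A * X" using 1[symmetric] by (simp only:)
  finally show "mink_adj (A * X) = A * X" .
qed

lemma P1:
  assumes A: "A \<in> carrier_mat m n" and X: "X \<in> carrier_mat n m"
    and "A * X * A = A" "mink_adj (A * X) = A * X"
  shows "mink_adj A * A * X = mink_adj A"
proof -
  have "mink_adj A = mink_adj (A * X * A)" using assms by simp
  also have "\<dots> = mink_adj A * mink_adj (A * X)"
    using A X by (intro adj_mult[of _ m m _ n]) auto
  also have "\<dots> = mink_adj A * A * X" using assms adj_carrier[of A] by (simp add: massoc)
  finally show ?thesis by simp
qed

lemma LAX:
  assumes A: "A \<in> carrier_mat m n" and X: "X \<in> carrier_mat n m" and Z: "Z \<in> carrier_mat n m"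
    and E: "mink_adj A * A * X = mink_adj A" and F: "mink_adj A * A * Z = mink_adj A"
  shows "A * X = A * Z"
proof -
  have Aa: "mink_adj A \<in> carrier_mat n m" and Za: "mink_adj Z \<in> carrier_mat m n"
    using adj_carrier[of A] adj_carrier[of Z] A Z by auto
  have "A * Z = mink_adj (A * Z)" using P2(3)[OF A Z F] by simp
  also have "\<dots> = mink_adj Z * mink_adj A" using A Z by (simp add: adj_mult)
  also have "\<dots> = mink_adj Z * (mink_adj A * A * X)" using E by simp
  also have "\<dots> = (mink_adj Z * mink_adj A * A) * X" using A X Aa Za
    by (simp add: massoc carrier_matD[OF A] carrier_matD[OF X] carrier_matD[OF Aa] carrier_matD[OF Za] carrier_matD[OF Z])
  also have "\<dots> = A * X" using P2(1)[OF A Z F] by simp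
  finally show ?thesis by simp
qed


lemma P23:
  assumes A: "A \<in> carrier_mat m n" and X: "X \<in> carrier_mat n m"
    and E: "mink_adj A * A * X = mink_adj A"
  shows "is_proj_onto_along m (A * X) (mat_range A) (mat_kernel (mink_adj A))"
proof -
  have Aa: "mink_adj A \<in> carrier_mat n m" and Xa: "mink_adj X \<in> carrier_mat m n"
    using adj_carrier[of A] adj_carrier[of X] A X by auto
  note p = P2[OF A X E]
  have AX: "A * X \<in> carrier_mat m m" using A X by auto
  have AXe: "A * X = mink_adj X * mink_adj A" using p(3) A X by (simp add: adj_mult)
  have K: "mat_kernel (mink_adj A) = {v \<in> carrier_vec m. mink_adj A *\<^sub>v v = 0\<^sub>v n}"
    unfolding mat_kernel_def using Aa by auto
  have R: "mat_range A = {A *\<^sub>v u | u. u \<in> carrier_vec n}"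
    unfolding mat_range_def using A by auto
  have Rs: "mat_range A \<subseteq> carrier_vec m" unfolding R using A by auto
  have PS: "(A * X) *\<^sub>v s = s" if sr: "s \<in> mat_range A" for s
  proof -
    obtain u where u: "u \<in> carrier_vec n" "s = A *\<^sub>v u" using sr R by auto
    have "(A * X) *\<^sub>v s = (A * X * A) *\<^sub>v u" unfolding u(2)
      by (rule assoc_mult_mat_vec[OF AX A u(1), symmetric])
    thus ?thesis using p(2) u by simp
  qed
  have PT: "(A * X) *\<^sub>v t = 0\<^sub>v m" if "t \<in> mat_kernel (mink_adj A)" for t
  proof -
    have t: "t \<in> carrier_vec m" "mink_adj A *\<^sub>v t = 0\<^sub>v n" using that K by auto
    have "(A * X) *\<^sub>v t = mink_adj X *\<^sub>v (mink_adj A *\<^sub>v t)" unfolding AXe using t Aa Xa by simp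
    thus ?thesis using t mv_zero[OF Xa] by simp
  qed
  have INT: "mat_range A \<inter> mat_kernel (mink_adj A) = {0\<^sub>v m}"
  proof
    show "{0\<^sub>v m} \<subseteq> mat_range A \<inter> mat_kernel (mink_adj A)"
    proof -
      have "0\<^sub>v m = A *\<^sub>v 0\<^sub>v n" using mv_zero[OF A] by simp
      moreover have "0\<^sub>v n \<in> carrier_vec n" by simp
      ultimately have "0\<^sub>v m \<in> mat_range A" unfolding R by blast
      moreover have "0\<^sub>v m \<in> mat_kernel (mink_adj A)" unfolding K using mv_zero[OF Aa] by simp
      ultimately show ?thesis by blast
    qed
    show "mat_range A \<inter> mat_kernel (mink_adj A) \<subseteq> {0\<^sub>v m}"
    proof
      fix v assume v: "v \<in> mat_range A \<inter> mat_kernel (mink_adj A)"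
      have "v = (A * X) *\<^sub>v v" using PS v by simp
      also have "\<dots> = 0\<^sub>v m" using PT v by simp
      finally show "v \<in> {0\<^sub>v m}" by simp
    qed
  qed
  have DEC: "\<exists>s \<in> mat_range A. \<exists>t \<in> mat_kernel (mink_adj A). v = s + t" if v: "v \<in> carrier_vec m" for v
  proof (intro bexI)
    let ?s = "(A * X) *\<^sub>v v"
    have s: "?s \<in> carrier_vec m" using AX v by simp
    show "?s \<in> mat_range A"
    proof -
      have "?s = A *\<^sub>v (X *\<^sub>v v)" using A X v by simp
      moreover have "X *\<^sub>v v \<in> carrier_vec n" using X v by simp
      ultimately show ?thesis unfolding R by blast
    qed
    show "v - ?s \<in> mat_kernel (mink_adj A)"
    proof -
      have "mink_adj A *\<^sub>v (v - ?s) = mink_adj A *\<^sub>v v - mink_adj A *\<^sub>v ?s"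
        using Aa v s by (simp add: mult_minus_distrib_mat_vec)
      also have "mink_adj A *\<^sub>v ?s = (mink_adj A * A * X) *\<^sub>v v"
        using Aa A X v by (simp add: assoc_mult_mat_vec[of _ n m _ m] massoc)
      also have "\<dots> = mink_adj A *\<^sub>v v" using E by simp
      also have "mink_adj A *\<^sub>v v - mink_adj A *\<^sub>v v = 0\<^sub>v n"
        using Aa v by (intro eq_vecI) auto
      finally show ?thesis unfolding K using v s by auto
    qed
    show "v = ?s + (v - ?s)" using v s carrier_matD[OF A] by (intro eq_vecI) auto
  qed
  have Ks: "mat_kernel (mink_adj A) \<subseteq> carrier_vec m" unfolding K by auto
  show ?thesis unfolding is_proj_onto_along_def
    using AX Rs Ks INT DEC PS PT by blast
qed

lemma P32:
  assumes A: "A \<in> carrier_mat m n" and X: "X \<in> carrier_mat n m"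
    and H: "is_proj_onto_along m (A * X) (mat_range A) (mat_kernel (mink_adj A))"
  shows "mink_adj A * A * X = mink_adj A"
proof -
  have Aa: "mink_adj A \<in> carrier_mat n m" using adj_carrier[of A] A by auto
  have K: "mat_kernel (mink_adj A) = {v \<in> carrier_vec m. mink_adj A *\<^sub>v v = 0\<^sub>v n}"
    unfolding mat_kernel_def using Aa by auto
  have M: "mink_adj A * A * X \<in> carrier_mat n m" using Aa A X by auto
  have key: "(mink_adj A * A * X) *\<^sub>v v = mink_adj A *\<^sub>v v" if v: "v \<in> carrier_vec m" for v
  proof -
    obtain s t where st: "s \<in> mat_range A" "t \<in> mat_kernel (mink_adj A)" "v = s + t"
      using H v unfolding is_proj_onto_along_def by blast
    have sc: "s \<in> carrier_vec m" and tc: "t \<in> carrier_vec m" and t0: "mink_adj A *\<^sub>v t = 0\<^sub>v n"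
      using H st unfolding is_proj_onto_along_def K by auto
    have Ps: "(A * X) *\<^sub>v s = s" and Pt: "(A * X) *\<^sub>v t = 0\<^sub>v m"
      using H st unfolding is_proj_onto_along_def by auto
    have "(mink_adj A * A * X) *\<^sub>v v = (mink_adj A * (A * X)) *\<^sub>v v"
      using Aa A X by (simp add: massoc)
    also have "\<dots> = mink_adj A *\<^sub>v ((A * X) *\<^sub>v v)"
      using Aa A X v by (intro assoc_mult_mat_vec[of _ n m _ m]) auto
    also have "(A * X) *\<^sub>v v = s" unfolding st(3)
      using A X sc tc Ps Pt by (simp add: mult_add_distrib_mat_vec[of _ m m])
    also have "mink_adj A *\<^sub>v s = mink_adj A *\<^sub>v v" unfolding st(3)
      using Aa sc tc t0 by (simp add: mult_add_distrib_mat_vec[of _ n m])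
    finally show ?thesis .
  qed
  show ?thesis
  proof (rule mat_col_eqI)
    fix i assume i: "i < dim_col (mink_adj A)"
    hence im: "i < m" using A by simp
    have "col (mink_adj A * A * X) i = (mink_adj A * A * X) *\<^sub>v unit_vec m i"
      using mv_unit[OF M im] by simp
    also have "\<dots> = mink_adj A *\<^sub>v unit_vec m i" using key by simp
    also have "\<dots> = col (mink_adj A) i" using mv_unit[OF Aa im] by simp
    finally show "col (mink_adj A * A * X) i = col (mink_adj A) i" .
  qed (insert M Aa, (metis carrier_matD)+)
qed


lemma P3set:
  assumes A: "A \<in> carrier_mat m n" and Z: "Z \<in> inv_1_3m A"
    and iff: "\<And>X. X \<in> carrier_mat n m \<Longrightarrow> X \<in> inv_1_3m A \<longleftrightarrow> mink_adj A * A * X = mink_adj A"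
  shows "inv_1_3m A = {Z + (1\<^sub>m n - Z * A) * Y | Y. Y \<in> carrier_mat n m}"
proof -
  have Zc: "Z \<in> carrier_mat n m" using Z A unfolding inv_1_3m_def by auto
  have ZE: "mink_adj A * A * Z = mink_adj A" using iff[OF Zc] Z by simp
  have ZA: "Z * A \<in> carrier_mat n n" using Zc A by auto
  have AZA: "A * Z * A = A" using Z unfolding inv_1_3m_def by auto
  show ?thesis
  proof (intro equalityI subsetI)
    fix X assume X: "X \<in> inv_1_3m A"
    have Xc: "X \<in> carrier_mat n m" using X A unfolding inv_1_3m_def by auto
    have XE: "mink_adj A * A * X = mink_adj A" using iff[OF Xc] X by simp
    have AXZ: "A * X = A * Z" by (rule LAX[OF A Xc Zc XE ZE])
    have D: "X - Z \<in> carrier_mat n m" using Xc Zc by auto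
    have "Z * A * (X - Z) = Z * A * X - Z * A * Z"
      using ZA Xc Zc by (rule mult_minus_distrib_mat)
    also have "Z * A * X = Z * A * Z"
      using AXZ Zc A Xc by (simp add: massoc carrier_matD[OF Zc] carrier_matD[OF A] carrier_matD[OF Xc])
    also have "Z * A * Z - Z * A * Z = 0\<^sub>m n m" using ZA Zc by (intro eq_matI) auto
    finally have 0: "Z * A * (X - Z) = 0\<^sub>m n m" .
    have "(1\<^sub>m n - Z * A) * (X - Z) = 1\<^sub>m n * (X - Z) - Z * A * (X - Z)"
      using ZA D by (intro minus_mult_distrib_mat) auto
    also have "\<dots> = X - Z" unfolding 0 left_mult_one_mat[OF D] using D carrier_matD[OF Zc] carrier_matD[OF Xc] by (intro eq_matI) auto
    finally have "Z + (1\<^sub>m n - Z * A) * (X - Z) = Z + (X - Z)" by simp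
    also have "\<dots> = X" using Xc Zc by (intro eq_matI) auto
    finally have "X = Z + (1\<^sub>m n - Z * A) * (X - Z)" by (rule sym)
    thus "X \<in> {Z + (1\<^sub>m n - Z * A) * Y | Y. Y \<in> carrier_mat n m}" using D by blast
  next
    fix W assume "W \<in> {Z + (1\<^sub>m n - Z * A) * Y | Y. Y \<in> carrier_mat n m}"
    then obtain Y where Y: "Y \<in> carrier_mat n m" and W: "W = Z + (1\<^sub>m n - Z * A) * Y" by auto
    have IZ: "1\<^sub>m n - Z * A \<in> carrier_mat n n" using ZA by (intro minus_carrier_mat one_carrier_mat)
    have Wc: "W \<in> carrier_mat n m" unfolding W using Zc IZ Y by auto
    have "A * (1\<^sub>m n - Z * A) = A * 1\<^sub>m n - A * (Z * A)"
      using A ZA by (intro mult_minus_distrib_mat) auto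
    also have "A * (Z * A) = A" using AZA A Zc by (simp add: massoc carrier_matD[OF Zc] carrier_matD[OF A])
    also have "A * 1\<^sub>m n - A = 0\<^sub>m m n" using A by (intro eq_matI) auto
    finally have A0: "A * (1\<^sub>m n - Z * A) = 0\<^sub>m m n" .
    have "A * ((1\<^sub>m n - Z * A) * Y) = (A * (1\<^sub>m n - Z * A)) * Y"
      using A IZ Y by (intro assoc_mult_mat[symmetric])
    also have "\<dots> = 0\<^sub>m m m" unfolding A0 using Y by (intro left_mult_zero_mat)
    finally have A0Y: "A * ((1\<^sub>m n - Z * A) * Y) = 0\<^sub>m m m" .
    have "A * W = A * Z + A * ((1\<^sub>m n - Z * A) * Y)"
      unfolding W using A Zc IZ Y by (intro mult_add_distrib_mat) auto
    also have "\<dots> = A * Z" unfolding A0Y using A Zc by (intro eq_matI) auto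
    finally have AW: "A * W = A * Z" .
    have "mink_adj A * A * W = mink_adj A * (A * W)"
      using A Wc by (simp add: massoc carrier_matD[OF Wc] carrier_matD[OF A])
    also have "\<dots> = mink_adj A * (A * Z)" unfolding AW ..
    also have "\<dots> = mink_adj A * A * Z"
      using A Zc by (simp add: massoc carrier_matD[OF Zc] carrier_matD[OF A])
    finally have "mink_adj A * A * W = mink_adj A" using ZE by simp
    thus "W \<in> inv_1_3m A" using iff[OF Wc] by simp
  qed
qed

theorem theorem4p3:
  fixes A X :: "complex mat" and m n :: nat
  assumes "0 < m" and "0 < n"
    and "A \<in> carrier_mat m n" and "X \<in> carrier_mat n m"
  shows "(X \<in> inv_1_3m A \<longleftrightarrow> mink_adj A * A * X = mink_adj A)
       \<and> (mink_adj A * A * X = mink_adj A \<longleftrightarrow>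
            is_proj_onto_along m (A * X) (mat_range A) (mat_kernel (mink_adj A)))
       \<and> (\<forall>Z \<in> inv_1_3m A. inv_1_3m A =
            {Z + (1\<^sub>m n - Z * A) * Y | Y. Y \<in> carrier_mat n m})"
proof -
  note A = assms(3)
  have iff: "X' \<in> inv_1_3m A \<longleftrightarrow> mink_adj A * A * X' = mink_adj A"
    if X': "X' \<in> carrier_mat n m" for X'
  proof
    assume "X' \<in> inv_1_3m A"
    hence "A * X' * A = A" "mink_adj (A * X') = A * X'" unfolding inv_1_3m_def by auto
    thus "mink_adj A * A * X' = mink_adj A" by (rule P1[OF A X'])
  next
    assume E: "mink_adj A * A * X' = mink_adj A"
    have "X' \<in> carrier_mat (dim_col A) (dim_row A)" using X' A by (metis carrier_matD)
    thus "X' \<in> inv_1_3m A" unfolding inv_1_3m_def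
      using P2(2,3)[OF A X' E] by blast
  qed
  show ?thesis
  proof (intro conjI ballI)
    show "X \<in> inv_1_3m A \<longleftrightarrow> mink_adj A * A * X = mink_adj A" by (rule iff[OF assms(4)])
    show "mink_adj A * A * X = mink_adj A \<longleftrightarrow>
            is_proj_onto_along m (A * X) (mat_range A) (mat_kernel (mink_adj A))"
      using P23[OF A assms(4)] P32[OF A assms(4)] by blast
    fix Z assume "Z \<in> inv_1_3m A"
    thus "inv_1_3m A = {Z + (1\<^sub>m n - Z * A) * Y | Y. Y \<in> carrier_mat n m}"
      by (rule P3set[OF A _ iff])
  qed
qed

end
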